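(* Let $\underline a=(a_1,a_2,a_3)$, $\underline b=(b_1,b_2,b_3)\in\mathbb{Z}^3$ with all $a_i,b_i\equiv1\pmod4$ and $\gcd(a_1,a_2,a_3)=\gcd(b_1,b_2,b_3)=1$. The subgroup $\{1\}\times\Delta\mathbf{S}^3\subseteq G$ acts freely on $P^{10}_{\underline a,\underline b}$ if and only if $\gcd(a_1,a_2\pm a_3)=1$ and $\gcd(b_1,b_2\pm b_3)=1$.
   Context: $\mathbf{S}^3$ is the group of unit quaternions, $G=\mathbf{S}^3\times\mathbf{S}^3\times\mathbf{S}^3$, $\Delta\mathbf{S}^3=\{(q,q)\}$, $Q=\{\pm1,\pm i,\pm j,\pm k\}$ with diagonal $\Delta Q\subset G$. $\mathrm{Pin}(2)_{\underline a}=\{(e^{ia_1\theta},e^{ia_2\theta},e^{ia_3\theta})\mid\theta\in\mathbb{R}\}\cup\{(e^{ia_1\theta}j,e^{ia_2\theta}j,e^{ia_3\theta}j)\mid\theta\in\mathbb{R}\}$, $\mathrm{Pjn}(2)_{\underline b}=\{(e^{jb_1\theta},e^{jb_2\theta},e^{jb_3\theta})\}\cup\{(ie^{jb_1\theta},ie^{jb_2\theta},ie^{jb_3\theta})\}$. $P^{10}_{\underline a,\underline b}$ is the cohomogeneity-one $G$-manifold with principal isotropy group $\Delta Q$ and singular isotropy groups $\mathrm{Pin}(2)_{\underline a}$, $\mathrm{Pjn}(2)_{\underline b}$: $P^{10}_{\underline a,\underline b}=(G\times_{\mathrm{Pin}(2)_{\underline a}}\mathbf{D}^2)\cup_{G/\Delta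 Q}(G\times_{\mathrm{Pjn}(2)_{\underline b}}\mathbf{D}^2)$, where each singular isotropy group $K$ acts linearly on $\mathbf{D}^2$ extending its transitive action on the circle $K/\Delta Q$, and $G$ acts by left multiplication on the $G$-factor. Its orbits are the principal orbits $G/\Delta Q$ and the singular orbits $G/\mathrm{Pin}(2)_{\underline a}$, $G/\mathrm{Pjn}(2)_{\underline b}$. *)

theory Defs
  imports Complex_Main
begin

datatype quat = Quat (re: real) (im1: real) (im2: real) (im3: real)

definition qmult :: "quat \<Rightarrow> quat \<Rightarrow> quat" (infixl "\<cdot>\<^sub>q" 70) where
  "qmult p q = Quat
     (re p * re q - im1 p * im1 q - im2 p * im2 q - im3 p * im3 q)
     (re p * im1 q + im1 p * re q + im2 p * im3 q - im3 p * im2 q)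
     (re p * im2 q - im1 p * im3 q + im2 p * re q + im3 p * im1 q)
     (re p * im3 q + im1 p * im2 q - im2 p * im1 q + im3 p * re q)"

definition qone :: quat where "qone = Quat 1 0 0 0"
definition qi :: quat where "qi = Quat 0 1 0 0"
definition qj :: quat where "qj = Quat 0 0 1 0"
definition qk :: quat where "qk = Quat 0 0 0 1"
definition qneg :: "quat \<Rightarrow> quat" where
  "qneg q = Quat (- re q) (- im1 q) (- im2 q) (- im3 q)"
definition qconj :: "quat \<Rightarrow> quat" where
  "qconj q = Quat (re q) (- im1 q) (- im2 q) (- im3 q)"

definition S3 :: "quat set" where
  "S3 = {q. (re q)\<^sup>2 + (im1 q)\<^sup>2 + (im2 q)\<^sup>2 + (im3 q)\<^sup>2 = 1}"

definition expi :: "real \<Rightarrow> quat" where "expi t = Quat (cos t) (sin t) 0 0"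
definition expj :: "real \<Rightarrow> quat" where "expj t = Quat (cos t) 0 (sin t) 0"

definition Qgrp :: "quat set" where
  "Qgrp = {qone, qneg qone, qi, qneg qi, qj, qneg qj, qk, qneg qk}"

type_synonym g3 = "quat \<times> quat \<times> quat"

definition Gmult :: "g3 \<Rightarrow> g3 \<Rightarrow> g3" where
  "Gmult x y = (case x of (x1, x2, x3) \<Rightarrow> case y of (y1, y2, y3) \<Rightarrow>
                  (x1 \<cdot>\<^sub>q y1, x2 \<cdot>\<^sub>q y2, x3 \<cdot>\<^sub>q y3))"

definition Ginv :: "g3 \<Rightarrow> g3" where
  "Ginv x = (case x of (x1, x2, x3) \<Rightarrow> (qconj x1, qconj x2, qconj x3))"

definition Gone :: g3 where "Gone = (qone, qone, qone)"

definition Gset :: "g3 set" where "Gset = S3 \<times> S3 \<times> S3"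

definition DeltaQ :: "g3 set" where "DeltaQ = {(q, q, q) | q. q \<in> Qgrp}"

definition Pin2 :: "int \<Rightarrow> int \<Rightarrow> int \<Rightarrow> g3 set" where
  "Pin2 a1 a2 a3 =
     {(expi (of_int a1 * t), expi (of_int a2 * t), expi (of_int a3 * t)) | t. True}
   \<union> {(expi (of_int a1 * t) \<cdot>\<^sub>q qj, expi (of_int a2 * t) \<cdot>\<^sub>q qj, expi (of_int a3 * t) \<cdot>\<^sub>q qj) | t. True}"

definition Pjn2 :: "int \<Rightarrow> int \<Rightarrow> int \<Rightarrow> g3 set" where
  "Pjn2 b1 b2 b3 =
     {(expj (of_int b1 * t), expj (of_int b2 * t), expj (of_int b3 * t)) | t. True}
   \<union> {(qi \<cdot>\<^sub>q expj (of_int b1 * t), qi \<cdot>\<^sub>q expj (of_int b2 * t), qi \<cdot>\<^sub>q expj (of_int b3 * t)) | t. True}"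

text \<open>Standard model: P = (G \<times> [-1,1]) / \<sim>, where (g,t) \<sim> (g',s) iff t = s and
  g^{-1} g' lies in the isotropy group at t: Pin(2)_a at t = -1, Pjn(2)_b at t = 1,
  and \<Delta>Q for -1 < t < 1.  This is canonically G-equivariantly the union of the two
  disk bundles G \<times>_K D^2 glued along G/\<Delta>Q (radial coordinate 1+t resp. 1-t).\<close>

definition iso_grp :: "int \<times> int \<times> int \<Rightarrow> int \<times> int \<times> int \<Rightarrow> real \<Rightarrow> g3 set" where
  "iso_grp a b t =
     (if t = -1 then (case a of (a1, a2, a3) \<Rightarrow> Pin2 a1 a2 a3)
      else if t = 1 then (case b of (b1, b2, b3) \<Rightarrow> Pjn2 b1 b2 b3)
      else DeltaQ)"

definition Pcarrier :: "(g3 \<times> real) set" where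
  "Pcarrier = Gset \<times> {-1..1}"

definition Prel :: "int \<times> int \<times> int \<Rightarrow> int \<times> int \<times> int \<Rightarrow> ((g3 \<times> real) \<times> (g3 \<times> real)) set" where
  "Prel a b = {((g, t), (g', s)). (g, t) \<in> Pcarrier \<and> (g', s) \<in> Pcarrier \<and> t = s
                   \<and> Gmult (Ginv g) g' \<in> iso_grp a b t}"

definition P10 :: "int \<times> int \<times> int \<Rightarrow> int \<times> int \<times> int \<Rightarrow> (g3 \<times> real) set set" where
  "P10 a b = Pcarrier // Prel a b"

definition Gact :: "g3 \<Rightarrow> (g3 \<times> real) set \<Rightarrow> (g3 \<times> real) set" where
  "Gact h X = (\<lambda>(g, t). (Gmult h g, t)) ` X"

definition H1DS3 :: "g3 set" where
  "H1DS3 = {(qone, q, q) | q. q \<in> S3}"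

definition acts_freely :: "g3 set \<Rightarrow> (g3 \<times> real) set set \<Rightarrow> bool" where
  "acts_freely H M \<longleftrightarrow> (\<forall>h\<in>H. \<forall>x\<in>M. Gact h x = x \<longrightarrow> h = Gone)"

end

theory Submission imports Defs begin

definition nsq :: "quat \<Rightarrow> real" where
  "nsq q = (re q)\<^sup>2 + (im1 q)\<^sup>2 + (im2 q)\<^sup>2 + (im3 q)\<^sup>2"

lemma quat_eqI: "re p = re q \<Longrightarrow> im1 p = im1 q \<Longrightarrow> im2 p = im2 q \<Longrightarrow> im3 p = im3 q \<Longrightarrow> p = q"
  by (cases p; cases q) auto

lemma qmult_assoc: "(p \<cdot>\<^sub>q q) \<cdot>\<^sub>q r = p \<cdot>\<^sub>q (q \<cdot>\<^sub>q r)"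
  by (rule quat_eqI) (simp_all add: qmult_def algebra_simps)

lemma qone_mult[simp]: "qone \<cdot>\<^sub>q q = q" and mult_qone[simp]: "q \<cdot>\<^sub>q qone = q"
  by (rule quat_eqI; simp add: qmult_def qone_def)+

lemma qconj_mult: "qconj (p \<cdot>\<^sub>q q) = qconj q \<cdot>\<^sub>q qconj p"
  by (rule quat_eqI) (simp_all add: qmult_def qconj_def algebra_simps)

lemma qconj_qconj[simp]: "qconj (qconj q) = q"
  by (rule quat_eqI) (simp_all add: qconj_def)

lemma qconj_qone[simp]: "qconj qone = qone"
  by (rule quat_eqI) (simp_all add: qconj_def qone_def)

lemma S3_nsq: "q \<in> S3 \<longleftrightarrow> nsq q = 1" by (simp add: S3_def nsq_def)

lemma mult_qconj: "q \<cdot>\<^sub>q qconj q = Quat (nsq q) 0 0 0"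
  by (rule quat_eqI) (simp_all add: qmult_def qconj_def nsq_def algebra_simps power2_eq_square)

lemma qconj_mult_self: "qconj q \<cdot>\<^sub>q q = Quat (nsq q) 0 0 0"
  by (rule quat_eqI) (simp_all add: qmult_def qconj_def nsq_def algebra_simps power2_eq_square)

lemma unit_r: "q \<in> S3 \<Longrightarrow> q \<cdot>\<^sub>q qconj q = qone"
  by (simp add: mult_qconj S3_nsq qone_def)
lemma unit_l: "q \<in> S3 \<Longrightarrow> qconj q \<cdot>\<^sub>q q = qone"
  by (simp add: qconj_mult_self S3_nsq qone_def)

lemma nsq_mult: "nsq (p \<cdot>\<^sub>q q) = nsq p * nsq q"
  by (simp add: nsq_def qmult_def power2_eq_square algebra_simps)

lemma S3_mult: "p \<in> S3 \<Longrightarrow> q \<in> S3 \<Longrightarrow> p \<cdot>\<^sub>q q \<in> S3"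
  by (simp add: S3_nsq nsq_mult)

lemma S3_conj: "q \<in> S3 \<Longrightarrow> qconj q \<in> S3"
  by (simp add: S3_nsq nsq_def qconj_def)

lemma re_conjugate: "re (qconj p \<cdot>\<^sub>q r \<cdot>\<^sub>q p) = re r * nsq p"
  by (simp add: nsq_def qmult_def qconj_def power2_eq_square algebra_simps)

lemma expi_add: "expi x \<cdot>\<^sub>q expi y = expi (x + y)"
  by (rule quat_eqI) (simp_all add: qmult_def expi_def cos_add sin_add algebra_simps)
lemma expj_add: "expj x \<cdot>\<^sub>q expj y = expj (x + y)"
  by (rule quat_eqI) (simp_all add: qmult_def expj_def cos_add sin_add algebra_simps)
lemma expj_qi: "expj x \<cdot>\<^sub>q (qi \<cdot>\<^sub>q expj y) = qi \<cdot>\<^sub>q expj (y - x)"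
  by (rule quat_eqI) (simp_all add: qmult_def expj_def qi_def cos_diff sin_diff algebra_simps)
lemma qconj_expi: "qconj (expi x) = expi (-x)"
  by (rule quat_eqI) (simp_all add: expi_def qconj_def)
lemma qconj_expj: "qconj (expj x) = expj (-x)"
  by (rule quat_eqI) (simp_all add: expj_def qconj_def)
lemma conj_qj_expi: "qconj qj \<cdot>\<^sub>q expi y \<cdot>\<^sub>q qj = expi (-y)"
  by (rule quat_eqI) (simp_all add: qmult_def expi_def qj_def qconj_def)
lemma conj_qi_expj: "qconj qi \<cdot>\<^sub>q expj y \<cdot>\<^sub>q qi = expj (-y)"
  by (rule quat_eqI) (simp_all add: qmult_def expj_def qi_def qconj_def)
lemma re_expi_qj: "re (expi x \<cdot>\<^sub>q qj) = 0"
  by (simp add: qmult_def expi_def qj_def)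
lemma re_qi_expj: "re (qi \<cdot>\<^sub>q expj x) = 0"
  by (simp add: qmult_def expj_def qi_def)
lemma S3_expi: "expi x \<in> S3" by (simp add: S3_def expi_def)
lemma S3_expj: "expj x \<in> S3" by (simp add: S3_def expj_def)
lemma S3_qone: "qone \<in> S3" by (simp add: S3_def qone_def)
lemma S3_qj: "qj \<in> S3" by (simp add: S3_def qj_def)
lemma S3_qi: "qi \<in> S3" by (simp add: S3_def qi_def)
lemma cos1_sin0: "cos (x::real) = 1 \<Longrightarrow> sin x = 0"
proof -
  assume "cos x = 1"
  then have "(sin x)\<^sup>2 = 0" using sin_cos_squared_add[of x] by simp
  then show ?thesis by simp
qed
lemma expi_eq_one: "expi x = qone \<longleftrightarrow> cos x = 1"
  using cos1_sin0[of x] by (auto simp: expi_def qone_def)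
lemma expj_eq_one: "expj x = qone \<longleftrightarrow> cos x = 1"
  using cos1_sin0[of x] by (auto simp: expj_def qone_def)
lemma expi_zero: "expi 0 = qone" by (simp add: expi_def qone_def)
lemma expj_zero: "expj 0 = qone" by (simp add: expj_def qone_def)

lemma Gmult_simp[simp]: "Gmult (x1,x2,x3) (y1,y2,y3) = (x1 \<cdot>\<^sub>q y1, x2 \<cdot>\<^sub>q y2, x3 \<cdot>\<^sub>q y3)"
  by (simp add: Gmult_def)
lemma Ginv_simp[simp]: "Ginv (x1,x2,x3) = (qconj x1, qconj x2, qconj x3)"
  by (simp add: Ginv_def)

lemma fixed_class:
  assumes g: "g \<in> Gset" and h: "h \<in> Gset" and t: "t \<in> {-1..1}"
    and cl: "\<And>k. k \<in> iso_grp a b t \<Longrightarrow> Gmult (Gmult (Ginv g) (Gmult h g)) k \<in> iso_grp a b t"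
    and cl2: "\<And>k. k \<in> iso_grp a b t \<Longrightarrow> Gmult (Ginv (Gmult (Ginv g) (Gmult h g))) k \<in> iso_grp a b t"
  shows "Gact h (Prel a b `` {(g,t)}) = Prel a b `` {(g,t)}"
proof -
  obtain g1 g2 g3 where gg: "g = (g1,g2,g3)" by (cases g) auto
  obtain h1 h2 h3 where hh: "h = (h1,h2,h3)" by (cases h) auto
  have gs: "g1 \<in> S3" "g2 \<in> S3" "g3 \<in> S3" using g gg by (auto simp: Gset_def)
  have hs: "h1 \<in> S3" "h2 \<in> S3" "h3 \<in> S3" using h hh by (auto simp: Gset_def)
  have key: "\<And>p u v. p \<in> S3 \<Longrightarrow> v \<in> S3 \<Longrightarrow> (qconj p \<cdot>\<^sub>q (v \<cdot>\<^sub>q p)) \<cdot>\<^sub>q (qconj p \<cdot>\<^sub>q u) = qconj p \<cdot>\<^sub>q (v \<cdot>\<^sub>q u)"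
    by (metis qmult_assoc unit_r qone_mult)
  have key2: "\<And>p u v. p \<in> S3 \<Longrightarrow> v \<in> S3 \<Longrightarrow> qconj (qconj p \<cdot>\<^sub>q (v \<cdot>\<^sub>q p)) \<cdot>\<^sub>q (qconj p \<cdot>\<^sub>q u) = qconj p \<cdot>\<^sub>q (qconj v \<cdot>\<^sub>q u)"
    by (metis qmult_assoc unit_r qone_mult qconj_mult qconj_qconj)
  have key3: "\<And>v u. v \<in> S3 \<Longrightarrow> v \<cdot>\<^sub>q (qconj v \<cdot>\<^sub>q u) = u"
    by (metis qmult_assoc unit_r qone_mult)
  show ?thesis
  proof (rule set_eqI, rule iffI)
    fix y assume "y \<in> Gact h (Prel a b `` {(g,t)})"
    then obtain g' t' where y: "y = (Gmult h g', t')" and r: "((g,t),(g',t')) \<in> Prel a b"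
      by (auto simp: Gact_def)
    obtain u1 u2 u3 where uu: "g' = (u1,u2,u3)" by (cases g') auto
    from r have tt: "t' = t" and us: "u1 \<in> S3" "u2 \<in> S3" "u3 \<in> S3"
      and k: "Gmult (Ginv g) g' \<in> iso_grp a b t"
      by (auto simp: Prel_def Pcarrier_def Gset_def uu)
    from cl[OF k] have "Gmult (Ginv g) (Gmult h g') \<in> iso_grp a b t"
      using gs hs by (simp add: gg hh uu key)
    then show "y \<in> Prel a b `` {(g,t)}"
      using y tt g t us hs gg hh uu by (auto simp: Prel_def Pcarrier_def Gset_def S3_mult)
  next
    fix y assume "y \<in> Prel a b `` {(g,t)}"
    then obtain g' where y: "y = (g', t)" and r: "((g,t),(g',t)) \<in> Prel a b"
      by (auto simp: Prel_def)
    obtain u1 u2 u3 where uu: "g' = (u1,u2,u3)" by (cases g') auto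
    from r have us: "u1 \<in> S3" "u2 \<in> S3" "u3 \<in> S3"
      and k: "Gmult (Ginv g) g' \<in> iso_grp a b t"
      by (auto simp: Prel_def Pcarrier_def Gset_def uu)
    from cl2[OF k] have k2: "Gmult (Ginv g) (Gmult (Ginv h) g') \<in> iso_grp a b t"
      using gs hs by (simp add: gg hh uu key2)
    have "((g,t), (Gmult (Ginv h) g', t)) \<in> Prel a b"
      using k2 g t us hs gg hh uu by (auto simp: Prel_def Pcarrier_def Gset_def S3_mult S3_conj)
    moreover have "y = (Gmult h (Gmult (Ginv h) g'), t)"
      using y hs uu hh by (simp add: key3)
    ultimately show "y \<in> Gact h (Prel a b `` {(g,t)})"
      unfolding Gact_def by force
  qed
qed

lemma free_main:
  assumes q: "q \<in> S3" and gt: "(g,t) \<in> Pcarrier"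
    and fx: "Gact (qone,q,q) (Prel a b `` {(g,t)}) = Prel a b `` {(g,t)}"
    and one: "Gone \<in> iso_grp a b t"
    and P: "\<And>k1 k2 k3. (k1,k2,k3) \<in> iso_grp a b t \<Longrightarrow> k1 = qone \<Longrightarrow> re k2 = re k3 \<Longrightarrow> k2 = qone"
  shows "q = qone"
proof -
  obtain g1 g2 g3 where gg: "g = (g1,g2,g3)" by (cases g) auto
  have gs: "g1 \<in> S3" "g2 \<in> S3" "g3 \<in> S3" and t: "t \<in> {-1..1}"
    using gt gg by (auto simp: Pcarrier_def Gset_def)
  have "Gmult (Ginv g) g = Gone" using gs gg by (simp add: unit_l Gone_def)
  then have "(g,t) \<in> Prel a b `` {(g,t)}" using gt one by (simp add: Prel_def)
  then have "(g,t) \<in> Gact (qone,q,q) (Prel a b `` {(g,t)})" using fx by simp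
  then obtain g' where gh: "g = Gmult (qone,q,q) g'" and r: "((g,t),(g',t)) \<in> Prel a b"
    by (auto simp: Gact_def Prel_def)
  obtain u1 u2 u3 where uu: "g' = (u1,u2,u3)" by (cases g') auto
  have k: "(qconj g1 \<cdot>\<^sub>q u1, qconj g2 \<cdot>\<^sub>q u2, qconj g3 \<cdot>\<^sub>q u3) \<in> iso_grp a b t"
    using r gg uu by (simp add: Prel_def)
  have e: "g1 = u1" "g2 = q \<cdot>\<^sub>q u2" "g3 = q \<cdot>\<^sub>q u3" using gh gg uu by auto
  have inv: "\<And>v. u2 = qconj q \<cdot>\<^sub>q g2" "u3 = qconj q \<cdot>\<^sub>q g3"
    using e q by (metis qmult_assoc unit_l qone_mult)+
  have r2: "re (qconj g2 \<cdot>\<^sub>q u2) = re (qconj q)"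
    using re_conjugate[of g2 "qconj q"] gs by (simp add: inv qmult_assoc S3_nsq)
  have r3: "re (qconj g3 \<cdot>\<^sub>q u3) = re (qconj q)"
    using re_conjugate[of g3 "qconj q"] gs by (simp add: inv qmult_assoc S3_nsq)
  have "qconj g2 \<cdot>\<^sub>q u2 = qone"
    using P[OF k] gs e r2 r3 by (simp add: unit_l)
  then have "qconj g2 \<cdot>\<^sub>q (qconj q \<cdot>\<^sub>q g2) = qone" by (simp add: inv)
  then have "g2 \<cdot>\<^sub>q (qconj g2 \<cdot>\<^sub>q (qconj q \<cdot>\<^sub>q g2)) \<cdot>\<^sub>q qconj g2 = qone"
    using gs by (simp add: unit_r)
  then have "qconj q = qone" using gs by (metis qmult_assoc unit_r qone_mult mult_qone)
  then show ?thesis by (metis qconj_qconj qconj_qone)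
qed

lemma real_free:
  fixes a1 a2 a3 :: int and s :: real
  assumes a1: "a1 \<noteq> 0" and cp: "coprime a1 (a2 + a3)" "coprime a1 (a2 - a3)"
    and c1: "cos (a1 * s) = 1" and ce: "cos (a2 * s) = cos (a3 * s)"
  shows "cos (a2 * s) = 1"
proof -
  obtain n :: int where n: "a1 * s = real_of_int n * 2 * pi" using c1 cos_one_2pi_int by blast
  have "sin ((a2 * s + a3 * s) / 2) = 0 \<or> sin ((a3 * s - a2 * s) / 2) = 0"
    using ce cos_diff_cos[of "a2 * s" "a3 * s"] by simp
  then obtain i :: int and e :: int where ie: "(a2 + e * a3) * s = 2 * real_of_int i * pi" and e: "coprime a1 (a2 + e * a3)"
  proof
    assume "sin ((a2 * s + a3 * s) / 2) = 0"
    then obtain i :: int where "(a2 * s + a3 * s) / 2 = real_of_int i * pi" using sin_zero_iff_int2 by blast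
    then have "(a2 + 1 * a3) * s = 2 * real_of_int i * pi" by (simp add: algebra_simps)
    then show ?thesis using that[of 1 i] cp by simp
  next
    assume "sin ((a3 * s - a2 * s) / 2) = 0"
    then obtain i :: int where "(a3 * s - a2 * s) / 2 = real_of_int i * pi" using sin_zero_iff_int2 by blast
    then have "(a2 + (-1) * a3) * s = 2 * real_of_int (-i) * pi" by (simp add: algebra_simps)
    then show ?thesis using that[of "-1" "-i"] cp by simp
  qed
  have "real_of_int ((a2 + e * a3) * n) * (2 * pi) = real_of_int (a1 * i) * (2*pi)"
  proof -
    have "real_of_int ((a2 + e * a3) * n) * (2 * pi) = (a2 + e * a3) * (a1 * s)"
      using n by simp
    also have "\<dots> = a1 * ((a2 + e * a3) * s)" by simp
    also have "\<dots> = real_of_int (a1 * i) * (2*pi)" using ie by simp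
    finally show ?thesis .
  qed
  then have "(a2 + e * a3) * n = a1 * i" using pi_gt_zero by (metis mult_cancel_right of_int_eq_iff pi_neq_zero mult_eq_0_iff zero_neq_numeral)
  then have "a1 dvd (a2 + e * a3) * n" by simp
  then have "a1 dvd n" using e by (simp add: coprime_dvd_mult_right_iff)
  then obtain r where r: "n = a1 * r" by auto
  have "s = real_of_int r * 2 * pi" using n r a1 by simp
  then have "a2 * s = (2 * pi) * of_int (a2 * r)" by (simp add: algebra_simps)
  then show ?thesis by (metis cos_int_2pin)
qed

lemma Pin2_P:
  assumes a1: "a1 \<noteq> 0" and cp: "coprime a1 (a2 + a3)" "coprime a1 (a2 - a3)"
    and k: "(k1,k2,k3) \<in> Pin2 a1 a2 a3" and k1: "k1 = qone" and r: "re k2 = re k3"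
  shows "k2 = qone"
  using k unfolding Pin2_def
proof (elim UnE CollectE exE conjE)
  fix s assume e: "(k1, k2, k3) = (expi (of_int a1 * s), expi (of_int a2 * s), expi (of_int a3 * s))"
  then have e1: "k1 = expi (of_int a1 * s)" "k2 = expi (of_int a2 * s)" "k3 = expi (of_int a3 * s)" by simp_all
  have "cos (a1 * s) = 1" using k1 e1(1) expi_eq_one[of "of_int a1 * s"] by simp
  moreover have "cos (a2 * s) = cos (a3 * s)" using r e1 by (simp add: expi_def)
  ultimately have "cos (a2 * s) = 1" using real_free[OF a1 cp] by blast
  then show ?thesis using e1(2) expi_eq_one[of "of_int a2 * s"] by simp
next
  fix s assume e: "(k1, k2, k3) = (expi (of_int a1 * s) \<cdot>\<^sub>q qj, expi (of_int a2 * s) \<cdot>\<^sub>q qj, expi (of_int a3 * s) \<cdot>\<^sub>q qj)"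
  then have "re k1 = 0" using re_expi_qj by simp
  then show ?thesis using k1 by (simp add: qone_def)
qed

lemma Pjn2_P:
  assumes a1: "a1 \<noteq> 0" and cp: "coprime a1 (a2 + a3)" "coprime a1 (a2 - a3)"
    and k: "(k1,k2,k3) \<in> Pjn2 a1 a2 a3" and k1: "k1 = qone" and r: "re k2 = re k3"
  shows "k2 = qone"
  using k unfolding Pjn2_def
proof (elim UnE CollectE exE conjE)
  fix s assume e: "(k1, k2, k3) = (expj (of_int a1 * s), expj (of_int a2 * s), expj (of_int a3 * s))"
  then have e1: "k1 = expj (of_int a1 * s)" "k2 = expj (of_int a2 * s)" "k3 = expj (of_int a3 * s)" by simp_all
  have "cos (a1 * s) = 1" using k1 e1(1) expj_eq_one[of "of_int a1 * s"] by simp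
  moreover have "cos (a2 * s) = cos (a3 * s)" using r e1 by (simp add: expj_def)
  ultimately have "cos (a2 * s) = 1" using real_free[OF a1 cp] by blast
  then show ?thesis using e1(2) expj_eq_one[of "of_int a2 * s"] by simp
next
  fix s assume e: "(k1, k2, k3) = (qi \<cdot>\<^sub>q expj (of_int a1 * s), qi \<cdot>\<^sub>q expj (of_int a2 * s), qi \<cdot>\<^sub>q expj (of_int a3 * s))"
  then have "re k1 = 0" using re_qi_expj by simp
  then show ?thesis using k1 by (simp add: qone_def)
qed

lemma DeltaQ_P: "(k1,k2,k3) \<in> DeltaQ \<Longrightarrow> k1 = qone \<Longrightarrow> k2 = qone"
  by (auto simp: DeltaQ_def)

lemma Gone_iso: "Gone \<in> iso_grp (a1,a2,a3) (b1,b2,b3) t"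
proof -
  have "Gone \<in> Pin2 a1 a2 a3" unfolding Pin2_def Gone_def
    by (rule UnI1, rule CollectI, rule exI[of _ 0]) (simp add: expi_zero)
  moreover have "Gone \<in> Pjn2 b1 b2 b3" unfolding Pjn2_def Gone_def
    by (rule UnI1, rule CollectI, rule exI[of _ 0]) (simp add: expj_zero)
  moreover have "Gone \<in> DeltaQ" by (auto simp: DeltaQ_def Gone_def Qgrp_def)
  ultimately show ?thesis by (simp add: iso_grp_def)
qed

lemma free_dir:
  assumes a1: "a1 \<noteq> 0" and b1: "b1 \<noteq> 0"
    and cp: "coprime a1 (a2 + a3)" "coprime a1 (a2 - a3)" "coprime b1 (b2 + b3)" "coprime b1 (b2 - b3)"
  shows "acts_freely H1DS3 (P10 (a1,a2,a3) (b1,b2,b3))"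
  unfolding acts_freely_def
proof (intro ballI impI)
  fix h x assume h: "h \<in> H1DS3" and x: "x \<in> P10 (a1,a2,a3) (b1,b2,b3)" and fx: "Gact h x = x"
  from h obtain q where hq: "h = (qone,q,q)" and q: "q \<in> S3" by (auto simp: H1DS3_def)
  from x obtain g t where gt: "(g,t) \<in> Pcarrier" and xe: "x = Prel (a1,a2,a3) (b1,b2,b3) `` {(g,t)}"
    by (auto simp: P10_def quotient_def)
  have P: "\<And>k1 k2 k3. (k1,k2,k3) \<in> iso_grp (a1,a2,a3) (b1,b2,b3) t \<Longrightarrow> k1 = qone \<Longrightarrow> re k2 = re k3 \<Longrightarrow> k2 = qone"
  proof -
    fix k1 k2 k3 assume k: "(k1,k2,k3) \<in> iso_grp (a1,a2,a3) (b1,b2,b3) t" and "k1 = qone" "re k2 = re k3"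
    show "k2 = qone"
    proof (cases "t = -1")
      case True
      then have "(k1,k2,k3) \<in> Pin2 a1 a2 a3" using k by (simp add: iso_grp_def)
      then show ?thesis using Pin2_P[OF a1 cp(1,2)] \<open>k1 = qone\<close> \<open>re k2 = re k3\<close> by blast
    next
      case f: False
      show ?thesis
      proof (cases "t = 1")
        case True
        then have "(k1,k2,k3) \<in> Pjn2 b1 b2 b3" using k by (simp add: iso_grp_def)
        then show ?thesis using Pjn2_P[OF b1 cp(3,4)] \<open>k1 = qone\<close> \<open>re k2 = re k3\<close> by blast
      next
        case False
        then have "(k1,k2,k3) \<in> DeltaQ" using k f by (simp add: iso_grp_def)
        then show ?thesis using DeltaQ_P \<open>k1 = qone\<close> by blast
      qed
    qed
  qed
  have "q = qone" using free_main[OF q gt _ Gone_iso P] fx hq xe by simp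
  then show "h = Gone" using hq by (simp add: Gone_def)
qed

lemma nonfree_generic:
  assumes g: "g \<in> Gset" and q: "q \<in> S3" and q1: "q \<noteq> qone" and t: "t \<in> {-1..1}"
    and cl: "\<And>k. k \<in> iso_grp a b t \<Longrightarrow> Gmult (Gmult (Ginv g) (Gmult (qone,q,q) g)) k \<in> iso_grp a b t"
    and cl2: "\<And>k. k \<in> iso_grp a b t \<Longrightarrow> Gmult (Ginv (Gmult (Ginv g) (Gmult (qone,q,q) g))) k \<in> iso_grp a b t"
  shows "\<not> acts_freely H1DS3 (P10 a b)"
proof -
  have h: "(qone,q,q) \<in> Gset" using q by (simp add: Gset_def S3_qone)
  have fx: "Gact (qone,q,q) (Prel a b `` {(g,t)}) = Prel a b `` {(g,t)}"
    by (rule fixed_class[OF g h t cl cl2])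
  have x: "Prel a b `` {(g,t)} \<in> P10 a b"
    unfolding P10_def quotient_def Pcarrier_def using g t by blast
  have "(qone,q,q) \<in> H1DS3" using q by (auto simp: H1DS3_def)
  moreover have "(qone,q,q) \<noteq> Gone" using q1 by (simp add: Gone_def)
  ultimately show ?thesis using fx x unfolding acts_freely_def by blast
qed

lemma expi_per: "expi (x + 2 * pi * of_int n) = expi x"
  by (simp add: expi_def cos_add sin_add)
lemma expj_per: "expj (x + 2 * pi * of_int n) = expj x"
  by (simp add: expj_def cos_add sin_add)

lemma real_nonfree:
  fixes a1 a2 a3 d e :: int
  assumes d: "d > 1" "d dvd a1" "d dvd (a2 + e * a3)" and e: "e = 1 \<or> e = -1"
    and g: "gcd a1 (gcd a2 a3) = 1"
  shows "\<exists>n::int. a1 * (2 * pi / d) = 0 + 2 * pi * of_int n"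
    and "\<exists>n::int. a3 * (2 * pi / d) = - (e * a2 * (2 * pi / d)) + 2 * pi * of_int n"
    and "cos (a2 * (2 * pi / d)) \<noteq> 1"
proof -
  obtain m where m: "a1 = d * m" using d by auto
  show "\<exists>n::int. a1 * (2 * pi / d) = 0 + 2 * pi * of_int n"
    using d by (intro exI[of _ m]) (simp add: m field_simps)
  obtain p where p: "a2 + e * a3 = d * p" using d by auto
  have "a3 = e * d * p - e * a2" using p e by (auto simp: algebra_simps)
  then have h: "real_of_int a3 = real_of_int (e * p) * d - real_of_int e * a2" 
    by (metis mult.commute mult.assoc of_int_diff of_int_mult)
  show "\<exists>n::int. a3 * (2 * pi / d) = - (e * a2 * (2 * pi / d)) + 2 * pi * of_int n"
    apply (rule exI[of _ "e * p"])
    apply (subst h)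
    using d by (simp add: field_simps)
  show "cos (a2 * (2 * pi / d)) \<noteq> 1"
  proof
    assume "cos (a2 * (2 * pi / d)) = 1"
    then obtain n :: int where "a2 * (2 * pi / d) = real_of_int n * 2 * pi" using cos_one_2pi_int by blast
    then have "real_of_int a2 = real_of_int (n * d)" using d by (simp add: field_simps)
    then have "a2 = n * d" by linarith
    then have "d dvd a2" by simp
    moreover have "d dvd a3" using e d \<open>d dvd a2\<close>
      by (metis dvd_add_right_iff dvd_mult dvd_minus_iff mult_1 mult_minus_left)
    ultimately have "d dvd gcd a1 (gcd a2 a3)" using d by simp
    then show False using g d by simp
  qed
qed

lemma ei1: "expi (a*x) \<cdot>\<^sub>q expi (a*s) = expi (a*(x+s))"
  by (simp add: expi_add distrib_left)
lemma ei2: "expi (a*x) \<cdot>\<^sub>q (expi (a*s) \<cdot>\<^sub>q qj) = expi (a*(x+s)) \<cdot>\<^sub>q qj"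
  by (simp only: qmult_assoc[symmetric] ei1)
lemma ej1: "expj (a*x) \<cdot>\<^sub>q expj (a*s) = expj (a*(x+s))"
  by (simp add: expj_add distrib_left)
lemma ej2: "expj (a*x) \<cdot>\<^sub>q (qi \<cdot>\<^sub>q expj (a*s)) = qi \<cdot>\<^sub>q expj (a*(s-x))"
  by (simp add: expj_qi right_diff_distrib)

lemma Pin2_closed:
  assumes k: "k \<in> Pin2 a1 a2 a3"
  shows "Gmult (expi (of_int a1 * x), expi (of_int a2 * x), expi (of_int a3 * x)) k \<in> Pin2 a1 a2 a3"
  using k unfolding Pin2_def
proof (elim UnE CollectE exE conjE)
  fix s assume "k = (expi (of_int a1 * s), expi (of_int a2 * s), expi (of_int a3 * s))"
  then have "Gmult (expi (of_int a1 * x), expi (of_int a2 * x), expi (of_int a3 * x)) k =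
     (expi (of_int a1 * (x+s)), expi (of_int a2 * (x+s)), expi (of_int a3 * (x+s)))"
    by (simp add: ei1)
  then show "Gmult (expi (of_int a1 * x), expi (of_int a2 * x), expi (of_int a3 * x)) k
    \<in> {(expi (of_int a1 * t), expi (of_int a2 * t), expi (of_int a3 * t)) |t. True} \<union>
       {(expi (of_int a1 * t) \<cdot>\<^sub>q qj, expi (of_int a2 * t) \<cdot>\<^sub>q qj, expi (of_int a3 * t) \<cdot>\<^sub>q qj) |t. True}"
    by blast
next
  fix s assume "k = (expi (of_int a1 * s) \<cdot>\<^sub>q qj, expi (of_int a2 * s) \<cdot>\<^sub>q qj, expi (of_int a3 * s) \<cdot>\<^sub>q qj)"
  then have "Gmult (expi (of_int a1 * x), expi (of_int a2 * x), expi (of_int a3 * x)) k =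
     (expi (of_int a1 * (x+s)) \<cdot>\<^sub>q qj, expi (of_int a2 * (x+s)) \<cdot>\<^sub>q qj, expi (of_int a3 * (x+s)) \<cdot>\<^sub>q qj)"
    by (simp add: ei2)
  then show "Gmult (expi (of_int a1 * x), expi (of_int a2 * x), expi (of_int a3 * x)) k
    \<in> {(expi (of_int a1 * t), expi (of_int a2 * t), expi (of_int a3 * t)) |t. True} \<union>
       {(expi (of_int a1 * t) \<cdot>\<^sub>q qj, expi (of_int a2 * t) \<cdot>\<^sub>q qj, expi (of_int a3 * t) \<cdot>\<^sub>q qj) |t. True}"
    by blast
qed

lemma Pjn2_closed:
  assumes k: "k \<in> Pjn2 a1 a2 a3"
  shows "Gmult (expj (of_int a1 * x), expj (of_int a2 * x), expj (of_int a3 * x)) k \<in> Pjn2 a1 a2 a3"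
  using k unfolding Pjn2_def
proof (elim UnE CollectE exE conjE)
  fix s assume "k = (expj (of_int a1 * s), expj (of_int a2 * s), expj (of_int a3 * s))"
  then have "Gmult (expj (of_int a1 * x), expj (of_int a2 * x), expj (of_int a3 * x)) k =
     (expj (of_int a1 * (x+s)), expj (of_int a2 * (x+s)), expj (of_int a3 * (x+s)))"
    by (simp add: ej1)
  then show "Gmult (expj (of_int a1 * x), expj (of_int a2 * x), expj (of_int a3 * x)) k
    \<in> {(expj (of_int a1 * t), expj (of_int a2 * t), expj (of_int a3 * t)) |t. True} \<union>
       {(qi \<cdot>\<^sub>q expj (of_int a1 * t), qi \<cdot>\<^sub>q expj (of_int a2 * t), qi \<cdot>\<^sub>q expj (of_int a3 * t)) |t. True}"
    by blast
next
  fix s assume "k = (qi \<cdot>\<^sub>q expj (of_int a1 * s), qi \<cdot>\<^sub>q expj (of_int a2 * s), qi \<cdot>\<^sub>q expj (of_int a3 * s))"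
  then have "Gmult (expj (of_int a1 * x), expj (of_int a2 * x), expj (of_int a3 * x)) k =
     (qi \<cdot>\<^sub>q expj (of_int a1 * (s-x)), qi \<cdot>\<^sub>q expj (of_int a2 * (s-x)), qi \<cdot>\<^sub>q expj (of_int a3 * (s-x)))"
    by (simp add: ej2)
  then show "Gmult (expj (of_int a1 * x), expj (of_int a2 * x), expj (of_int a3 * x)) k
    \<in> {(expj (of_int a1 * t), expj (of_int a2 * t), expj (of_int a3 * t)) |t. True} \<union>
       {(qi \<cdot>\<^sub>q expj (of_int a1 * t), qi \<cdot>\<^sub>q expj (of_int a2 * t), qi \<cdot>\<^sub>q expj (of_int a3 * t)) |t. True}"
    by blast
qed

lemma nonfree_Pin:
  fixes a1 a2 a3 d e :: int
  assumes d: "d > 1" "d dvd a1" "d dvd (a2 + e * a3)" and e: "e = 1 \<or> e = -1"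
    and g: "gcd a1 (gcd a2 a3) = 1"
  shows "\<not> acts_freely H1DS3 (P10 (a1,a2,a3) b)"
proof -
  define t0 where "t0 = 2 * pi / d"
  define q where "q = expi (a2 * t0)"
  define w where "w = (if e = 1 then qj else qone)"
  note R = real_nonfree[OF d e g, folded t0_def]
  have c1: "expi (a1 * t0) = qone" using R(1) expi_per[of 0] by (metis expi_zero)
  have c3: "qconj w \<cdot>\<^sub>q (q \<cdot>\<^sub>q w) = expi (a3 * t0)"
  proof -
    obtain n :: int where n: "a3 * t0 = - (e * a2 * t0) + 2 * pi * of_int n" using R(2) by blast
    have "expi (a3 * t0) = expi (- (e * a2 * t0))" by (simp only: n expi_per)
    then show ?thesis using e
      by (auto simp: w_def q_def conj_qj_expi simp flip: qmult_assoc)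
  qed
  have cc: "Gmult (Ginv (qone,qone,w)) (Gmult (qone,q,q) (qone,qone,w)) =
      (expi (of_int a1 * t0), expi (of_int a2 * t0), expi (of_int a3 * t0))"
    using c1 c3 by (simp add: q_def)
  have inv: "Ginv (expi (of_int a1 * t0), expi (of_int a2 * t0), expi (of_int a3 * t0)) =
      (expi (of_int a1 * (-t0)), expi (of_int a2 * (-t0)), expi (of_int a3 * (-t0)))"
    by (simp add: qconj_expi)
  have iso: "iso_grp (a1,a2,a3) b (-1) = Pin2 a1 a2 a3" by (simp add: iso_grp_def)
  show ?thesis
  proof (rule nonfree_generic[of "(qone,qone,w)" q "-1"])
    show "(qone,qone,w) \<in> Gset" by (simp add: Gset_def w_def S3_qone S3_qj)
    show "q \<in> S3" by (simp add: q_def S3_expi)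
    show "q \<noteq> qone" using R(3) by (simp add: q_def expi_eq_one)
    show "(-1::real) \<in> {-1..1}" by simp
  qed (simp_all only: cc inv iso Pin2_closed)
qed

lemma nonfree_Pjn:
  fixes b1 b2 b3 d e :: int
  assumes d: "d > 1" "d dvd b1" "d dvd (b2 + e * b3)" and e: "e = 1 \<or> e = -1"
    and g: "gcd b1 (gcd b2 b3) = 1"
  shows "\<not> acts_freely H1DS3 (P10 a (b1,b2,b3))"
proof -
  define t0 where "t0 = 2 * pi / d"
  define q where "q = expj (b2 * t0)"
  define w where "w = (if e = 1 then qi else qone)"
  note R = real_nonfree[OF d e g, folded t0_def]
  have c1: "expj (b1 * t0) = qone" using R(1) expj_per[of 0] by (metis expj_zero)
  have c3: "qconj w \<cdot>\<^sub>q (q \<cdot>\<^sub>q w) = expj (b3 * t0)"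
  proof -
    obtain n :: int where n: "b3 * t0 = - (e * b2 * t0) + 2 * pi * of_int n" using R(2) by blast
    have "expj (b3 * t0) = expj (- (e * b2 * t0))" by (simp only: n expj_per)
    then show ?thesis using e
      by (auto simp: w_def q_def conj_qi_expj simp flip: qmult_assoc)
  qed
  have cc: "Gmult (Ginv (qone,qone,w)) (Gmult (qone,q,q) (qone,qone,w)) =
      (expj (of_int b1 * t0), expj (of_int b2 * t0), expj (of_int b3 * t0))"
    using c1 c3 by (simp add: q_def)
  have inv: "Ginv (expj (of_int b1 * t0), expj (of_int b2 * t0), expj (of_int b3 * t0)) =
      (expj (of_int b1 * (-t0)), expj (of_int b2 * (-t0)), expj (of_int b3 * (-t0)))"
    by (simp add: qconj_expj)
  have iso: "iso_grp a (b1,b2,b3) 1 = Pjn2 b1 b2 b3" by (simp add: iso_grp_def)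
  show ?thesis
  proof (rule nonfree_generic[of "(qone,qone,w)" q "1"])
    show "(qone,qone,w) \<in> Gset" by (simp add: Gset_def w_def S3_qone S3_qi)
    show "q \<in> S3" by (simp add: q_def S3_expj)
    show "q \<noteq> qone" using R(3) by (simp add: q_def expj_eq_one)
    show "(1::real) \<in> {-1..1}" by simp
  qed (simp_all only: cc inv iso Pjn2_closed)
qed

lemma gcd_gt1: "(a1::int) \<noteq> 0 \<Longrightarrow> gcd a1 x \<noteq> 1 \<Longrightarrow> gcd a1 x > 1"
  by (metis gcd_eq_0_iff gcd_ge_0_int le_less not_less zless_imp_add1_zle add.left_neutral)

theorem lemma2p1:
  fixes a1 a2 a3 b1 b2 b3 :: int
  assumes "a1 mod 4 = 1" "a2 mod 4 = 1" "a3 mod 4 = 1"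
      and "b1 mod 4 = 1" "b2 mod 4 = 1" "b3 mod 4 = 1"
      and "gcd a1 (gcd a2 a3) = 1" and "gcd b1 (gcd b2 b3) = 1"
  shows "acts_freely H1DS3 (P10 (a1, a2, a3) (b1, b2, b3)) \<longleftrightarrow>
           (gcd a1 (a2 + a3) = 1 \<and> gcd a1 (a2 - a3) = 1 \<and>
            gcd b1 (b2 + b3) = 1 \<and> gcd b1 (b2 - b3) = 1)"
proof
  have a1: "a1 \<noteq> 0" using assms(1) by auto
  have b1: "b1 \<noteq> 0" using assms(4) by auto
  {
    assume "acts_freely H1DS3 (P10 (a1, a2, a3) (b1, b2, b3))"
    moreover have "gcd a1 (a2 + a3) = 1"
    proof (rule ccontr)
      assume "gcd a1 (a2 + a3) \<noteq> 1"
      then have "gcd a1 (a2 + 1 * a3) > 1" using gcd_gt1[OF a1] by simp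
      then show False using nonfree_Pin[of "gcd a1 (a2 + 1 * a3)" a1 a2 1 a3 "(b1,b2,b3)"] assms(7) calculation by simp
    qed
    moreover have "gcd a1 (a2 - a3) = 1"
    proof (rule ccontr)
      assume "gcd a1 (a2 - a3) \<noteq> 1"
      then have "gcd a1 (a2 + (-1) * a3) > 1" using gcd_gt1[OF a1] by simp
      then show False using nonfree_Pin[of "gcd a1 (a2 + (-1) * a3)" a1 a2 "-1" a3 "(b1,b2,b3)"] assms(7) calculation by simp
    qed
    moreover have "gcd b1 (b2 + b3) = 1"
    proof (rule ccontr)
      assume "gcd b1 (b2 + b3) \<noteq> 1"
      then have "gcd b1 (b2 + 1 * b3) > 1" using gcd_gt1[OF b1] by simp
      then show False using nonfree_Pjn[of "gcd b1 (b2 + 1 * b3)" b1 b2 1 b3 "(a1,a2,a3)"] assms(8) calculation by simp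
    qed
    moreover have "gcd b1 (b2 - b3) = 1"
    proof (rule ccontr)
      assume "gcd b1 (b2 - b3) \<noteq> 1"
      then have "gcd b1 (b2 + (-1) * b3) > 1" using gcd_gt1[OF b1] by simp
      then show False using nonfree_Pjn[of "gcd b1 (b2 + (-1) * b3)" b1 b2 "-1" b3 "(a1,a2,a3)"] assms(8) calculation by simp
    qed
    ultimately show "gcd a1 (a2 + a3) = 1 \<and> gcd a1 (a2 - a3) = 1 \<and> gcd b1 (b2 + b3) = 1 \<and> gcd b1 (b2 - b3) = 1"
      by blast
  }
  assume "gcd a1 (a2 + a3) = 1 \<and> gcd a1 (a2 - a3) = 1 \<and> gcd b1 (b2 + b3) = 1 \<and> gcd b1 (b2 - b3) = 1"
  then show "acts_freely H1DS3 (P10 (a1, a2, a3) (b1, b2, b3))"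
    using free_dir[OF a1 b1] by (simp add: coprime_iff_gcd_eq_1)
qed

end
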